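(* Let $\beta>0$, let $\tilde r_h\in\mathbb{R}^{\mathcal{S}\times\mathcal{A}}$ for $h\in[H]$, and let $d^t=(d^t_1,\dots,d^t_H)$ be a feasible occupancy measure with policies $\pi^t_h=\pi_{d^t_h}$. Let $$d^{t+1}=\arg\max_{d\in\Delta^H}\ \sum_{h=1}^H\Big(\langle d_h,\tilde r_h\rangle-\tfrac1\beta\sum_{h'=1}^h\mathcal{H}(d_{h'},d^t_{h'})\Big)\quad\text{s.t.}\quad E^Td_1=\nu_1,\ \ E^Td_h=F^Td_{h-1}\ \ \forall h\in\{2,\dots,H\}.$$ Then the policy $\pi^{t+1}_h=\pi_{d^{t+1}_h}$ with occupancy measure $d^{t+1}_h$ satisfies $$\pi^{t+1}_h(a|s)\ \propto\ \pi^t_h(a|s)\exp\Big(\frac{\beta}{H-h+1}Q^t_h(s,a)\Big),$$ where $Q^t_h$ and $V^t_h$ satisfy the recursion $V^t_{H+1}\equiv0$, $$Q^t_h=\tilde r_h+FV^t_{h+1},\qquad V^t_h(s)=\frac{H-h+1}{\beta}\log\sum_a\pi^t_h(a|s)\exp\Big(\frac{\beta}{H-h+1}Q^t_h(s,a)\Big).$$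
   Context: Finite state space $\mathcal{S}$, finite action space $\mathcal{A}$, horizon $H$, transition kernel $f$, initial distribution $\nu_1$. $\Delta^H$ is the $H$-fold product of the simplex $\Delta_{\mathcal{S}\times\mathcal{A}}$. $(E^Td)(s)=\sum_ad(s,a)$; $(F^Td)(s')=\sum_{s,a}f(s'|s,a)d(s,a)$; $(Fz)(s,a)=\sum_{s'}f(s'|s,a)z(s')$. For $d\in\Delta_{\mathcal{S}\times\mathcal{A}}$, $\pi_d(a|s)=d(s,a)/\sum_{a'}d(s,a')$. Conditional relative entropy: $\mathcal{H}(d,d')=\sum_{s,a}d(s,a)\log\frac{\pi_d(a|s)}{\pi_{d'}(a|s)}$. *)

theory Defs
  imports Complex_Main
begin

text \<open>The transition kernel is f :: 's => 's * 'a => real, with f s' (s,a) = f(s'|s,a).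
  Occupancy measures are d :: nat => 's * 'a => real, indexed by h in {1..H}.\<close>

definition simplex :: "('b::finite \<Rightarrow> real) set" where
  "simplex = {p. (\<forall>x. 0 \<le> p x) \<and> (\<Sum>x\<in>UNIV. p x) = 1}"

definition ET :: "('s \<times> 'a::finite \<Rightarrow> real) \<Rightarrow> 's \<Rightarrow> real" where
  "ET d s = (\<Sum>a\<in>UNIV. d (s, a))"

definition FT :: "('s \<Rightarrow> 's \<times> 'a \<Rightarrow> real) \<Rightarrow> ('s::finite \<times> 'a::finite \<Rightarrow> real) \<Rightarrow> 's \<Rightarrow> real" where
  "FT f d s' = (\<Sum>sa\<in>UNIV. f s' sa * d sa)"

definition Fop :: "('s::finite \<Rightarrow> 's \<times> 'a \<Rightarrow> real) \<Rightarrow> ('s \<Rightarrow> real) \<Rightarrow> 's \<times> 'a \<Rightarrow> real" where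
  "Fop f z sa = (\<Sum>s'\<in>UNIV. f s' sa * z s')"

definition pol :: "('s \<times> 'a::finite \<Rightarrow> real) \<Rightarrow> 's \<Rightarrow> 'a \<Rightarrow> real" where
  "pol d s a = d (s, a) / (\<Sum>a'\<in>UNIV. d (s, a'))"

definition cond_rel_ent :: "('s::finite \<times> 'a::finite \<Rightarrow> real) \<Rightarrow> ('s \<times> 'a \<Rightarrow> real) \<Rightarrow> real" where
  "cond_rel_ent d d' = (\<Sum>sa\<in>UNIV. d sa * ln (pol d (fst sa) (snd sa) / pol d' (fst sa) (snd sa)))"

definition feasible_occ :: "('s::finite \<Rightarrow> 's \<times> 'a::finite \<Rightarrow> real) \<Rightarrow> ('s \<Rightarrow> real) \<Rightarrow> nat
    \<Rightarrow> (nat \<Rightarrow> 's \<times> 'a \<Rightarrow> real) \<Rightarrow> bool" where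
  "feasible_occ f \<nu> H d \<longleftrightarrow>
     (\<forall>h\<in>{1..H}. d h \<in> simplex) \<and> ET (d 1) = \<nu> \<and>
     (\<forall>h\<in>{2..H}. ET (d h) = FT f (d (h - 1)))"

definition objective :: "real \<Rightarrow> nat \<Rightarrow> (nat \<Rightarrow> 's::finite \<times> 'a::finite \<Rightarrow> real)
    \<Rightarrow> (nat \<Rightarrow> 's \<times> 'a \<Rightarrow> real) \<Rightarrow> (nat \<Rightarrow> 's \<times> 'a \<Rightarrow> real) \<Rightarrow> real" where
  "objective \<beta> H r dt d =
     (\<Sum>h=1..H. (\<Sum>sa\<in>UNIV. d h sa * r h sa)
                - (1 / \<beta>) * (\<Sum>h'=1..h. cond_rel_ent (d h') (dt h')))"

end

theory Submission
  imports Defs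
begin

lemma sum_pair: "(\<Sum>sa\<in>(UNIV::('s::finite \<times> 'a::finite) set). F sa) = (\<Sum>s\<in>UNIV. \<Sum>a\<in>UNIV. F (s,a))"
  using sum.cartesian_product[of "\<lambda>s a. F (s,a)" UNIV UNIV] by (simp add: case_prod_beta')

lemma ET_weighted: "(\<Sum>s\<in>UNIV. ET d s * X s) = (\<Sum>sa\<in>(UNIV::('s::finite \<times> 'a::finite) set). d sa * X (fst sa))"
  by (simp add: sum_pair ET_def sum_distrib_right)

lemma ET_ge: "\<forall>sa. d sa \<ge> 0 \<Longrightarrow> d (s,a) \<le> ET d s"
  unfolding ET_def by (rule member_le_sum[where f="\<lambda>a. d (s,a)"]) auto

lemma pol_pos: "\<forall>sa. d sa \<ge> 0 \<Longrightarrow> d (s,a) > 0 \<Longrightarrow> pol d s a > 0"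
  using ET_ge[of d s a] unfolding pol_def ET_def[symmetric] by auto

lemma pol_ET: "pol d s a = d (s,a) / ET d s"
  by (simp add: pol_def ET_def)

lemma key_term:
  fixes k c d p q r Z :: real
  assumes "d \<ge> 0" "p > 0" "k > 0" "Z > 0" "d > 0 \<Longrightarrow> x > 0"
  shows "d * r - (1/k) * (d * ln (x / p)) =
     d * ((1/k) * ln Z) - d * (q - r) - (1/k) * (d * ln (x / (p * exp (k * q) / Z)))"
proof (cases "d = 0")
  case True then show ?thesis by simp
next
  case False
  then have "d > 0" "x > 0" using assms by auto
  then have e1: "ln (x / (p * exp (k * q) / Z)) = ln x - ln p - k*q + ln Z"
    using assms by (simp add: ln_div ln_mult)
  have e2: "ln (x / p) = ln x - ln p" using \<open>x > 0\<close> assms by (simp add: ln_div)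
  show ?thesis unfolding e1 e2 using assms by (simp add: field_simps)
qed

lemma key_ident:
  fixes d :: "'s::finite \<times> 'a::finite \<Rightarrow> real" and p :: "'s \<Rightarrow> 'a \<Rightarrow> real"
  assumes d0: "\<forall>sa. d sa \<ge> 0" and p0: "\<forall>s a. p s a > 0" and k0: "k > 0"
  shows "(\<Sum>sa\<in>UNIV. d sa * r sa) - (1/k) * (\<Sum>sa\<in>UNIV. d sa * ln (pol d (fst sa) (snd sa) / p (fst sa) (snd sa)))
    = (\<Sum>s\<in>UNIV. ET d s * ((1/k) * ln (\<Sum>a\<in>UNIV. p s a * exp (k * q (s,a)))))
      - (\<Sum>sa\<in>UNIV. d sa * (q sa - r sa))
      - (1/k) * (\<Sum>sa\<in>UNIV. d sa * ln (pol d (fst sa) (snd sa) /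
            (p (fst sa) (snd sa) * exp (k * q sa) / (\<Sum>a\<in>UNIV. p (fst sa) a * exp (k * q (fst sa,a))))))"
proof -
  define Z where "Z = (\<lambda>s. \<Sum>a\<in>UNIV. p s a * exp (k * q (s,a)))"
  define A where "A = (\<lambda>sa. d sa * ln (pol d (fst sa) (snd sa) / p (fst sa) (snd sa)))"
  define B where "B = (\<lambda>sa. d sa * ln (pol d (fst sa) (snd sa) / (p (fst sa) (snd sa) * exp (k * q sa) / Z (fst sa))))"
  have Z: "Z s > 0" for s
    unfolding Z_def by (rule sum_pos) (use p0 in auto)
  have eqp: "d sa * r sa - (1/k) * A sa
     = d sa * ((1/k) * ln (Z (fst sa))) - d sa * (q sa - r sa) - (1/k) * B sa" for sa
  proof -
    obtain s a where sa: "sa = (s,a)" by fastforce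
    show ?thesis unfolding sa fst_conv snd_conv A_def B_def
      by (rule key_term) (use d0 p0 k0 Z pol_pos[OF d0] in auto)
  qed
  have "(\<Sum>sa\<in>UNIV. d sa * r sa) - (1/k) * sum A UNIV = (\<Sum>sa\<in>UNIV. d sa * r sa - (1/k) * A sa)"
    by (simp add: sum_subtractf sum_distrib_left)
  also have "\<dots> = (\<Sum>sa\<in>UNIV. d sa * ((1/k) * ln (Z (fst sa))) - d sa * (q sa - r sa) - (1/k) * B sa)"
    by (rule sum.cong[OF refl eqp])
  also have "\<dots> = (\<Sum>sa\<in>UNIV. d sa * ((1/k) * ln (Z (fst sa)))) - (\<Sum>sa\<in>UNIV. d sa * (q sa - r sa)) - (1/k) * sum B UNIV"
    by (simp add: sum_subtractf sum_distrib_left)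
  also have "\<dots> = (\<Sum>s\<in>UNIV. ET d s * ((1/k) * ln (Z s))) - (\<Sum>sa\<in>UNIV. d sa * (q sa - r sa)) - (1/k) * sum B UNIV"
    by (subst ET_weighted) (rule refl)
  finally have "(\<Sum>sa\<in>UNIV. d sa * r sa) - (1/k) * sum A UNIV = (\<Sum>s\<in>UNIV. ET d s * ((1/k) * ln (Z s))) - (\<Sum>sa\<in>UNIV. d sa * (q sa - r sa)) - (1/k) * sum B UNIV" .
  then show ?thesis by (simp only: A_def B_def Z_def)
qed

lemma gibbs_term:
  fixes d E g :: real
  assumes d: "0 \<le> d" "d \<le> E" and g: "g > 0"
  shows "d * ln ((d/E)/g) - d + E*g \<ge> 0"
    and "d * ln ((d/E)/g) - d + E*g = 0 \<Longrightarrow> E > 0 \<Longrightarrow> d/E = g"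
proof -
  have main: "d * ln ((d/E)/g) \<ge> d - E*g \<and> (d * ln ((d/E)/g) = d - E*g \<longrightarrow> E > 0 \<longrightarrow> d/E = g)"
  proof (cases "d = 0")
    case True
    then show ?thesis using d g by (auto simp: mult_pos_pos)
  next
    case False
    then have dp: "d > 0" using d by auto
    then have Ep: "E > 0" using d by auto
    define y where "y = g / (d/E)"
    have yp: "y > 0" using dp Ep g by (simp add: y_def)
    have l: "ln ((d/E)/g) = - ln y" unfolding y_def using dp Ep g by (simp add: ln_div)
    have dy: "d * y = E * g" unfolding y_def using dp Ep by (simp add: field_simps)
    have "d * ln y \<le> d * (y - 1)" by (rule mult_left_mono) (use ln_le_minus_one[OF yp] dp in auto)
    moreover have "d * (y - 1) = E*g - d" using dy by (simp add: algebra_simps)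
    ultimately have 1: "d * ln ((d/E)/g) \<ge> d - E*g" unfolding l by simp
    have 2: "d/E = g" if "d * ln ((d/E)/g) = d - E*g"
    proof -
      have "d * (- ln y) = d * (1 - y)" using that dy unfolding l by (simp add: algebra_simps)
      then have "d * (ln y - y + 1) = 0" by (simp add: algebra_simps)
      then have "ln y = y - 1" using dp by simp
      then have "y = 1" using ln_eq_minus_one yp by blast
      then show ?thesis unfolding y_def using dp Ep g by (simp add: field_simps)
    qed
    show ?thesis using 1 2 by auto
  qed
  show "d * ln ((d/E)/g) - d + E*g \<ge> 0" using main by linarith
  show "d * ln ((d/E)/g) - d + E*g = 0 \<Longrightarrow> E > 0 \<Longrightarrow> d/E = g" using main by auto
qed

lemma gibbs_sum:
  fixes d :: "'s::finite \<times> 'a::finite \<Rightarrow> real" and g :: "'s \<Rightarrow> 'a \<Rightarrow> real"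
  assumes d0: "\<forall>sa. d sa \<ge> 0" and g0: "\<forall>s a. g s a > 0" and g1: "\<forall>s. (\<Sum>a\<in>UNIV. g s a) = 1"
  shows "(\<Sum>sa\<in>UNIV. d sa * ln (pol d (fst sa) (snd sa) / g (fst sa) (snd sa))) \<ge> 0"
    and "(\<Sum>sa\<in>UNIV. d sa * ln (pol d (fst sa) (snd sa) / g (fst sa) (snd sa))) = 0 \<Longrightarrow> ET d s > 0 \<Longrightarrow> pol d s a = g s a"
proof -
  define D where "D = (\<Sum>sa\<in>UNIV. d sa * ln (pol d (fst sa) (snd sa) / g (fst sa) (snd sa)))"
  define e where "e sa = d sa * ln (pol d (fst sa) (snd sa) / g (fst sa) (snd sa)) - d sa + ET d (fst sa) * g (fst sa) (snd sa)" for sa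
  have e_pair: "e (s,a) = d (s,a) * ln ((d (s,a) / ET d s) / g s a) - d (s,a) + ET d s * g s a" for s a
    unfolding e_def pol_ET by simp
  have e0: "e sa \<ge> 0" for sa
  proof -
    obtain s a where sa: "sa = (s,a)" by fastforce
    show ?thesis unfolding sa e_pair
      by (rule gibbs_term(1)) (use d0 ET_ge[OF d0] g0 in auto)
  qed
  have s1: "(\<Sum>sa\<in>UNIV. d sa) = (\<Sum>s\<in>UNIV. ET d s)"
    by (simp add: sum_pair ET_def)
  have s2: "(\<Sum>sa\<in>UNIV. ET d (fst sa) * g (fst sa) (snd sa)) = (\<Sum>s\<in>UNIV. ET d s)"
    by (simp add: sum_pair sum_distrib_left[symmetric] g1)
  have se: "sum e UNIV = D"
    unfolding e_def D_def sum.distrib sum_subtractf s1 s2 by simp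
  have "D \<ge> 0" unfolding se[symmetric] by (rule sum_nonneg) (use e0 in auto)
  then show "(\<Sum>sa\<in>UNIV. d sa * ln (pol d (fst sa) (snd sa) / g (fst sa) (snd sa))) \<ge> 0" by (simp only: D_def)
  assume "(\<Sum>sa\<in>UNIV. d sa * ln (pol d (fst sa) (snd sa) / g (fst sa) (snd sa))) = 0" and Ep: "ET d s > 0"
  then have D0: "D = 0" by (simp only: D_def)
  have "\<forall>x\<in>UNIV. e x = 0"
    using sum_nonneg_eq_0_iff[of UNIV e] e0 se D0 by auto
  then have "e (s,a) = 0" by auto
  then have "d (s,a) / ET d s = g s a"
    using gibbs_term(2)[of "d (s,a)" "ET d s" "g s a"] d0 ET_ge[OF d0] g0 Ep unfolding e_pair by auto
  then show "pol d s a = g s a" by (simp add: pol_ET)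
qed

lemma sum_tri:
  fixes e :: "nat \<Rightarrow> real"
  shows "(\<Sum>h=1..H. \<Sum>h'=1..h. e h') = (\<Sum>h=1..H. real (H - h + 1) * e h)"
proof (induction H)
  case 0
  then show ?case by simp
next
  case (Suc H)
  have "(\<Sum>h=1..Suc H. real (Suc H - h + 1) * e h) = (\<Sum>h=1..H. real (Suc H - h + 1) * e h) + e (Suc H)"
    by simp
  also have "(\<Sum>h=1..H. real (Suc H - h + 1) * e h) = (\<Sum>h=1..H. real (H - h + 1) * e h + e h)"
    by (rule sum.cong) (auto simp: Suc_diff_le algebra_simps)
  finally have "(\<Sum>h=1..Suc H. real (Suc H - h + 1) * e h) = (\<Sum>h=1..H. real (H - h + 1) * e h) + (\<Sum>h=1..Suc H. e h)"
    by (simp add: sum.distrib)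
  then show ?case using Suc by simp
qed

lemma objective_alt:
  "objective \<beta> H r dt d = (\<Sum>h=1..H. (\<Sum>sa\<in>UNIV. d h sa * r h sa) - (real (H - h + 1) / \<beta>) * cond_rel_ent (d h) (dt h))"
proof -
  have "objective \<beta> H r dt d = (\<Sum>h=1..H. (\<Sum>sa\<in>UNIV. d h sa * r h sa)) - (1/\<beta>) * (\<Sum>h=1..H. \<Sum>h'=1..h. cond_rel_ent (d h') (dt h'))"
    unfolding objective_def by (simp add: sum_subtractf sum_distrib_left)
  also have "\<dots> = (\<Sum>h=1..H. (\<Sum>sa\<in>UNIV. d h sa * r h sa)) - (1/\<beta>) * (\<Sum>h=1..H. real (H - h + 1) * cond_rel_ent (d h) (dt h))"
    by (simp only: sum_tri)
  also have "\<dots> = (\<Sum>h=1..H. (\<Sum>sa\<in>UNIV. d h sa * r h sa) - (real (H - h + 1) / \<beta>) * cond_rel_ent (d h) (dt h))"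
    by (simp add: sum_subtractf sum_distrib_left)
  finally show ?thesis .
qed

lemma swap_F:
  fixes d :: "'s::finite \<times> 'a::finite \<Rightarrow> real"
  shows "(\<Sum>sa\<in>UNIV. d sa * Fop f z sa) = (\<Sum>s'\<in>UNIV. FT f d s' * z s')"
proof -
  have "(\<Sum>sa\<in>UNIV. d sa * Fop f z sa) = (\<Sum>sa\<in>UNIV. \<Sum>s'\<in>UNIV. f s' sa * d sa * z s')"
    unfolding Fop_def by (simp add: sum_distrib_left mult_ac)
  also have "\<dots> = (\<Sum>s'\<in>UNIV. \<Sum>sa\<in>UNIV. f s' sa * d sa * z s')"
    by (rule sum.swap)
  also have "\<dots> = (\<Sum>s'\<in>UNIV. FT f d s' * z s')"
    unfolding FT_def by (simp add: sum_distrib_right)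
  finally show ?thesis .
qed

definition gib :: "real \<Rightarrow> nat \<Rightarrow> (nat \<Rightarrow> 's \<times> 'a::finite \<Rightarrow> real) \<Rightarrow> (nat \<Rightarrow> 's \<times> 'a \<Rightarrow> real) \<Rightarrow> nat \<Rightarrow> 's \<Rightarrow> 'a \<Rightarrow> real" where
  "gib \<beta> H dt Q h s a = pol (dt h) s a * exp (\<beta> / real (H - h + 1) * Q h (s, a)) /
     (\<Sum>a'\<in>UNIV. pol (dt h) s a' * exp (\<beta> / real (H - h + 1) * Q h (s, a')))"

lemma obj_decomp:
  fixes f :: "'s::finite \<Rightarrow> 's \<times> 'a::finite \<Rightarrow> real"
    and \<nu> :: "'s \<Rightarrow> real" and H :: nat and \<beta> :: real
    and r :: "nat \<Rightarrow> 's \<times> 'a \<Rightarrow> real"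
    and dt d :: "nat \<Rightarrow> 's \<times> 'a \<Rightarrow> real"
    and Q :: "nat \<Rightarrow> 's \<times> 'a \<Rightarrow> real" and V :: "nat \<Rightarrow> 's \<Rightarrow> real"
  assumes beta_pos: "\<beta> > 0"
    and d_feas: "feasible_occ f \<nu> H d"
    and dt_pos: "\<forall>h\<in>{1..H}. \<forall>sa. dt h sa > 0"
    and V_last: "\<forall>s. V (H + 1) s = 0"
    and Q_rec: "\<forall>h\<in>{1..H}. \<forall>sa. Q h sa = r h sa + Fop f (V (h + 1)) sa"
    and V_rec: "\<forall>h\<in>{1..H}. \<forall>s. V h s =
        (real (H - h + 1) / \<beta>) *
          ln (\<Sum>a\<in>UNIV. pol (dt h) s a * exp (\<beta> / real (H - h + 1) * Q h (s, a)))"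
  shows "objective \<beta> H r dt d = (\<Sum>s\<in>UNIV. \<nu> s * V 1 s)
     - (\<Sum>h=1..H. (real (H - h + 1) / \<beta>) * (\<Sum>sa\<in>UNIV. d h sa * ln (pol (d h) (fst sa) (snd sa) / gib \<beta> H dt Q h (fst sa) (snd sa))))"
proof -
  define a where "a h = (\<Sum>s\<in>UNIV. ET (d h) s * V h s)" for h
  define D where "D h = (\<Sum>sa\<in>UNIV. d h sa * ln (pol (d h) (fst sa) (snd sa) / gib \<beta> H dt Q h (fst sa) (snd sa)))" for h
  have termh: "(\<Sum>sa\<in>UNIV. d h sa * r h sa) - (real (H - h + 1) / \<beta>) * cond_rel_ent (d h) (dt h)
      = a h - a (Suc h) - (real (H - h + 1) / \<beta>) * D h" if h: "h \<in> {1..H}" for h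
  proof -
    define k where "k = \<beta> / real (H - h + 1)"
    have k0: "k > 0" unfolding k_def using beta_pos by simp
    have k1: "1/k = real (H - h + 1) / \<beta>" unfolding k_def by simp
    have d0: "\<forall>sa. d h sa \<ge> 0" using d_feas h unfolding feasible_occ_def simplex_def by auto
    have p0: "\<forall>s a. pol (dt h) s a > 0"
    proof (intro allI)
      fix s a
      have "\<forall>sa. dt h sa \<ge> 0" using dt_pos h by (auto intro: less_imp_le)
      moreover have "dt h (s,a) > 0" using dt_pos h by auto
      ultimately show "pol (dt h) s a > 0" by (rule pol_pos)
    qed
    note KI = key_ident[OF d0 p0 k0, of "r h" "Q h"]
    have e1: "(\<Sum>s\<in>UNIV. ET (d h) s * ((1/k) * ln (\<Sum>a\<in>UNIV. pol (dt h) s a * exp (k * Q h (s,a))))) = a h"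
      unfolding a_def k1 using V_rec h by (simp add: k_def)
    have e2: "(\<Sum>sa\<in>UNIV. d h sa * (Q h sa - r h sa)) = a (Suc h)"
    proof -
      have "(\<Sum>sa\<in>UNIV. d h sa * (Q h sa - r h sa)) = (\<Sum>sa\<in>UNIV. d h sa * Fop f (V (Suc h)) sa)"
        by (rule sum.cong) (use Q_rec h in auto)
      also have "\<dots> = (\<Sum>s'\<in>UNIV. FT f (d h) s' * V (Suc h) s')" by (rule swap_F)
      also have "\<dots> = a (Suc h)"
      proof (cases "h = H")
        case True
        then show ?thesis unfolding a_def using V_last by simp
      next
        case False
        then have "Suc h \<in> {2..H}" using h by auto
        then have "ET (d (Suc h)) = FT f (d h)" using d_feas unfolding feasible_occ_def by fastforce
        then show ?thesis unfolding a_def by simp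
      qed
      finally show ?thesis .
    qed
    have e3: "(\<Sum>sa\<in>UNIV. d h sa * ln (pol (d h) (fst sa) (snd sa) /
            (pol (dt h) (fst sa) (snd sa) * exp (k * Q h sa) / (\<Sum>a\<in>UNIV. pol (dt h) (fst sa) a * exp (k * Q h (fst sa,a)))))) = D h"
      unfolding D_def gib_def k_def by simp
    show ?thesis using KI[unfolded e1 e2 e3] unfolding k1 cond_rel_ent_def by simp
  qed
  have "objective \<beta> H r dt d = (\<Sum>h=1..H. a h - a (Suc h) - (real (H - h + 1) / \<beta>) * D h)"
    unfolding objective_alt by (rule sum.cong[OF refl termh])
  also have "\<dots> = (\<Sum>h=1..H. a h - a (Suc h)) - (\<Sum>h=1..H. (real (H - h + 1) / \<beta>) * D h)"
    by (simp add: sum_subtractf)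
  also have "(\<Sum>h=1..H. a h - a (Suc h)) = a 1 - a (Suc H)"
    using sum_Suc_diff[of 1 H a] by (simp add: sum_subtractf)
  also have "a (Suc H) = 0" unfolding a_def using V_last by simp
  also have "a 1 = (\<Sum>s\<in>UNIV. \<nu> s * V 1 s)" unfolding a_def using d_feas unfolding feasible_occ_def by simp
  finally show ?thesis unfolding D_def by simp
qed

lemma gib_props:
  assumes dt_pos: "\<forall>h\<in>{1..H}. \<forall>sa. dt h sa > 0" and h: "h \<in> {1..H}"
  shows "\<forall>s a. gib \<beta> H dt Q h s a > 0" and "\<forall>s. (\<Sum>a\<in>UNIV. gib \<beta> H dt Q h s a) = 1"
proof -
  have p0: "pol (dt h) s a > 0" for s a
  proof -
    have "\<forall>sa. dt h sa \<ge> 0" using dt_pos h by (auto intro: less_imp_le)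
    moreover have "dt h (s,a) > 0" using dt_pos h by auto
    ultimately show "pol (dt h) s a > 0" by (rule pol_pos)
  qed
  have Z: "(\<Sum>a'\<in>UNIV. pol (dt h) s a' * exp (\<beta> / real (H - h + 1) * Q h (s, a'))) > 0" for s
    by (rule sum_pos) (use p0 in auto)
  show "\<forall>s a. gib \<beta> H dt Q h s a > 0" unfolding gib_def using Z p0 by simp
  show "\<forall>s. (\<Sum>a\<in>UNIV. gib \<beta> H dt Q h s a) = 1"
  proof
    fix s
    show "(\<Sum>a\<in>UNIV. gib \<beta> H dt Q h s a) = 1"
      unfolding gib_def sum_divide_distrib[symmetric] using Z[of s] by simp
  qed
qed

lemma D_zero:
  fixes d :: "'s::finite \<times> 'a::finite \<Rightarrow> real" and g :: "'s \<Rightarrow> 'a \<Rightarrow> real"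
  assumes m0: "\<forall>s. m s \<ge> 0" and g1: "\<forall>s. (\<Sum>a\<in>UNIV. g s a) = 1" and g0: "\<forall>s a. g s a > 0"
    and dd: "\<forall>sa. d sa = m (fst sa) * g (fst sa) (snd sa)"
  shows "(\<Sum>sa\<in>UNIV. d sa * ln (pol d (fst sa) (snd sa) / g (fst sa) (snd sa))) = 0"
proof (rule sum.neutral, rule ballI)
  fix sa :: "'s \<times> 'a"
  obtain s a where sa: "sa = (s,a)" by fastforce
  have ET: "ET d s = m s" unfolding ET_def using dd g1 by (simp add: sum_distrib_left[symmetric])
  show "d sa * ln (pol d (fst sa) (snd sa) / g (fst sa) (snd sa)) = 0"
  proof (cases "m s = 0")
    case True then show ?thesis using dd sa by simp
  next
    case False
    then have "pol d s a = g s a" unfolding pol_ET ET using dd by simp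
    then show ?thesis using sa g0 by (simp add: less_imp_neq[symmetric])
  qed
qed

fun Mseq :: "('s::finite \<Rightarrow> real) \<Rightarrow> ('s \<Rightarrow> 's \<times> 'a::finite \<Rightarrow> real) \<Rightarrow> (nat \<Rightarrow> 's \<Rightarrow> 'a \<Rightarrow> real) \<Rightarrow> nat \<Rightarrow> 's \<Rightarrow> real" where
  "Mseq \<nu> f g 0 = \<nu>"
| "Mseq \<nu> f g (Suc n) = FT f (\<lambda>sa. Mseq \<nu> f g n (fst sa) * g (Suc n) (fst sa) (snd sa))"

lemma Mseq_props:
  fixes f :: "'s::finite \<Rightarrow> 's \<times> 'a::finite \<Rightarrow> real" and g :: "nat \<Rightarrow> 's \<Rightarrow> 'a \<Rightarrow> real"
  assumes kernel: "\<forall>s a. (\<lambda>s'. f s' (s, a)) \<in> simplex"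
    and init: "\<nu> \<in> simplex"
    and g0: "\<forall>h\<in>{1..H}. \<forall>s a. g h s a > 0"
    and g1: "\<forall>h\<in>{1..H}. \<forall>s. (\<Sum>a\<in>UNIV. g h s a) = 1"
  shows "n < H \<Longrightarrow> (\<forall>s. Mseq \<nu> f g n s \<ge> 0) \<and> (\<Sum>s\<in>UNIV. Mseq \<nu> f g n s) = 1"
proof (induction n)
  case 0
  then show ?case using init unfolding simplex_def by simp
next
  case (Suc n)
  then have IH: "\<forall>s. Mseq \<nu> f g n s \<ge> 0" "(\<Sum>s\<in>UNIV. Mseq \<nu> f g n s) = 1" by auto
  have hS: "Suc n \<in> {1..H}" using Suc by auto
  have f0: "f s' sa \<ge> 0" for s' sa
    using kernel unfolding simplex_def by (cases sa) auto
  have f1: "(\<Sum>s'\<in>UNIV. f s' sa) = 1" for sa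
    using kernel unfolding simplex_def by (cases sa) auto
  have "Mseq \<nu> f g (Suc n) s \<ge> 0" for s
  proof -
    have gn: "g (Suc n) s a \<ge> 0" for s a using g0 hS by (meson less_imp_le)
    show ?thesis unfolding Mseq.simps FT_def
      by (rule sum_nonneg) (use f0 IH(1) gn in \<open>auto intro!: mult_nonneg_nonneg\<close>)
  qed
  moreover have "(\<Sum>s\<in>UNIV. Mseq \<nu> f g (Suc n) s) = 1"
  proof -
    have "(\<Sum>s\<in>UNIV. Mseq \<nu> f g (Suc n) s)
        = (\<Sum>s'\<in>UNIV. \<Sum>sa\<in>UNIV. f s' sa * (Mseq \<nu> f g n (fst sa) * g (Suc n) (fst sa) (snd sa)))"
      unfolding Mseq.simps FT_def ..
    also have "\<dots> = (\<Sum>sa\<in>UNIV. \<Sum>s'\<in>UNIV. f s' sa * (Mseq \<nu> f g n (fst sa) * g (Suc n) (fst sa) (snd sa)))"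
      by (rule sum.swap)
    also have "\<dots> = (\<Sum>sa\<in>UNIV. Mseq \<nu> f g n (fst sa) * g (Suc n) (fst sa) (snd sa))"
      by (simp add: sum_distrib_right[symmetric] f1)
    also have "\<dots> = (\<Sum>s\<in>UNIV. Mseq \<nu> f g n s * (\<Sum>a\<in>UNIV. g (Suc n) s a))"
      by (simp add: sum_pair sum_distrib_left)
    also have "\<dots> = 1" using g1 hS IH(2) by simp
    finally show ?thesis .
  qed
  ultimately show ?case by blast
qed

lemma dstar_feas:
  fixes f :: "'s::finite \<Rightarrow> 's \<times> 'a::finite \<Rightarrow> real" and g :: "nat \<Rightarrow> 's \<Rightarrow> 'a \<Rightarrow> real"
  assumes kernel: "\<forall>s a. (\<lambda>s'. f s' (s, a)) \<in> simplex"
    and init: "\<nu> \<in> simplex"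
    and g0: "\<forall>h\<in>{1..H}. \<forall>s a. g h s a > 0"
    and g1: "\<forall>h\<in>{1..H}. \<forall>s. (\<Sum>a\<in>UNIV. g h s a) = 1"
    and H1: "H \<ge> 1"
  shows "feasible_occ f \<nu> H (\<lambda>h sa. Mseq \<nu> f g (h - 1) (fst sa) * g h (fst sa) (snd sa))"
proof -
  note MP = Mseq_props[OF kernel init g0 g1]
  have ET: "ET (\<lambda>sa. Mseq \<nu> f g (h - 1) (fst sa) * g h (fst sa) (snd sa)) s = Mseq \<nu> f g (h - 1) s"
    if h: "h \<in> {1..H}" for h s
    unfolding ET_def using g1 h by (simp add: sum_distrib_left[symmetric])
  have simp: "(\<lambda>sa. Mseq \<nu> f g (h - 1) (fst sa) * g h (fst sa) (snd sa)) \<in> simplex"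
    if h: "h \<in> {1..H}" for h
  proof -
    have hl: "h - 1 < H" using h by auto
    have gn: "g h s a \<ge> 0" for s a using g0 h by (meson less_imp_le)
    have "\<forall>x. 0 \<le> Mseq \<nu> f g (h - 1) (fst x) * g h (fst x) (snd x)"
      using MP[OF hl] gn by (auto intro!: mult_nonneg_nonneg)
    moreover have "(\<Sum>x\<in>UNIV. Mseq \<nu> f g (h - 1) (fst x) * g h (fst x) (snd x)) = 1"
      using MP[OF hl] g1 h by (simp add: sum_pair sum_distrib_left[symmetric])
    ultimately show ?thesis unfolding simplex_def by blast
  qed
  have E1: "ET (\<lambda>sa. Mseq \<nu> f g (1 - 1) (fst sa) * g 1 (fst sa) (snd sa)) = \<nu>"
    using ET[of 1] H1 by (auto simp: fun_eq_iff)
  have E2: "ET (\<lambda>sa. Mseq \<nu> f g (h - 1) (fst sa) * g h (fst sa) (snd sa)) =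
      FT f (\<lambda>sa. Mseq \<nu> f g (h - 1 - 1) (fst sa) * g (h - 1) (fst sa) (snd sa))"
    if h: "h \<in> {2..H}" for h
  proof -
    obtain n where n: "h = Suc (Suc n)" using h by (metis atLeastAtMost_iff add_2_eq_Suc le_Suc_ex)
    have "ET (\<lambda>sa. Mseq \<nu> f g (h - 1) (fst sa) * g h (fst sa) (snd sa)) = Mseq \<nu> f g (h - 1)"
      using ET h by (auto simp: fun_eq_iff)
    then show ?thesis unfolding n by simp
  qed
  show ?thesis unfolding feasible_occ_def using simp E1 E2 by auto
qed

theorem theorem7:
  fixes f :: "'s::finite \<Rightarrow> 's \<times> 'a::finite \<Rightarrow> real"
    and \<nu> :: "'s \<Rightarrow> real" and H :: nat and \<beta> :: real
    and r :: "nat \<Rightarrow> 's \<times> 'a \<Rightarrow> real"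
    and dt dn :: "nat \<Rightarrow> 's \<times> 'a \<Rightarrow> real"
    and Q :: "nat \<Rightarrow> 's \<times> 'a \<Rightarrow> real" and V :: "nat \<Rightarrow> 's \<Rightarrow> real"
  assumes kernel: "\<forall>s a. (\<lambda>s'. f s' (s, a)) \<in> simplex"
    and init: "\<nu> \<in> simplex"
    and beta_pos: "\<beta> > 0"
    and dt_feas: "feasible_occ f \<nu> H dt"
    and dt_pos: "\<forall>h\<in>{1..H}. \<forall>sa. dt h sa > 0"
    and dn_feas: "feasible_occ f \<nu> H dn"
    and dn_max: "\<forall>d. feasible_occ f \<nu> H d \<longrightarrow> objective \<beta> H r dt d \<le> objective \<beta> H r dt dn"
    and V_last: "\<forall>s. V (H + 1) s = 0"
    and Q_rec: "\<forall>h\<in>{1..H}. \<forall>sa. Q h sa = r h sa + Fop f (V (h + 1)) sa"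
    and V_rec: "\<forall>h\<in>{1..H}. \<forall>s. V h s =
        (real (H - h + 1) / \<beta>) *
          ln (\<Sum>a\<in>UNIV. pol (dt h) s a * exp (\<beta> / real (H - h + 1) * Q h (s, a)))"
  shows "\<forall>h\<in>{1..H}. \<forall>s. ET (dn h) s > 0 \<longrightarrow>
           (\<exists>c. \<forall>a. pol (dn h) s a = c * (pol (dt h) s a * exp (\<beta> / real (H - h + 1) * Q h (s, a))))"
proof (cases "H = 0")
  case True
  then show ?thesis by simp
next
  case False
  then have H1: "H \<ge> 1" by simp
  define g where "g = gib \<beta> H dt Q"
  have g0: "\<forall>h\<in>{1..H}. \<forall>s a. g h s a > 0" unfolding g_def using gib_props(1)[OF dt_pos] by blast
  have g1: "\<forall>h\<in>{1..H}. \<forall>s. (\<Sum>a\<in>UNIV. g h s a) = 1" unfolding g_def using gib_props(2)[OF dt_pos] by blast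
  define ds where "ds = (\<lambda>h sa. Mseq \<nu> f g (h - 1) (fst sa) * g h (fst sa) (snd sa))"
  have ds_feas: "feasible_occ f \<nu> H ds" unfolding ds_def by (rule dstar_feas[OF kernel init g0 g1 H1])
  define Dn where "Dn h = (\<Sum>sa\<in>UNIV. dn h sa * ln (pol (dn h) (fst sa) (snd sa) / g h (fst sa) (snd sa)))" for h
  define A where "A = (\<Sum>s\<in>UNIV. \<nu> s * V 1 s)"
  note OD = obj_decomp[OF beta_pos _ dt_pos V_last Q_rec V_rec, folded g_def]
  have "objective \<beta> H r dt ds = A - (\<Sum>h=1..H. (real (H - h + 1) / \<beta>) * 0)"
    unfolding OD[OF ds_feas] A_def
  proof (intro arg_cong2[where f="(-)"] refl sum.cong)
    fix h assume h: "h \<in> {1..H}"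
    have "(\<Sum>sa\<in>UNIV. ds h sa * ln (pol (ds h) (fst sa) (snd sa) / g h (fst sa) (snd sa))) = 0"
    proof (rule D_zero)
      show "\<forall>s. Mseq \<nu> f g (h - 1) s \<ge> 0"
        using Mseq_props[OF kernel init g0 g1, of "h - 1"] h by auto
      show "\<forall>s. (\<Sum>a\<in>UNIV. g h s a) = 1" using g1 h by auto
      show "\<forall>s a. g h s a > 0" using g0 h by auto
      show "\<forall>sa. ds h sa = Mseq \<nu> f g (h - 1) (fst sa) * g h (fst sa) (snd sa)" unfolding ds_def by simp
    qed
    then show "real (H - h + 1) / \<beta> * (\<Sum>sa\<in>UNIV. ds h sa * ln (pol (ds h) (fst sa) (snd sa) / g h (fst sa) (snd sa))) =
         real (H - h + 1) / \<beta> * 0" by simp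
  qed
  then have objds: "objective \<beta> H r dt ds = A" by simp
  have objdn: "objective \<beta> H r dt dn = A - (\<Sum>h=1..H. (real (H - h + 1) / \<beta>) * Dn h)"
    unfolding OD[OF dn_feas] A_def Dn_def ..
  have Dn0: "Dn h \<ge> 0" if h: "h \<in> {1..H}" for h
  proof -
    have d0: "\<forall>sa. dn h sa \<ge> 0" using dn_feas h unfolding feasible_occ_def simplex_def by auto
    show ?thesis unfolding Dn_def
      by (rule gibbs_sum(1)[OF d0]) (use g0 g1 h in auto)
  qed
  have terms0: "(real (H - h + 1) / \<beta>) * Dn h \<ge> 0" if h: "h \<in> {1..H}" for h
    using Dn0[OF h] beta_pos by simp
  have "(\<Sum>h=1..H. (real (H - h + 1) / \<beta>) * Dn h) \<le> 0"
    using dn_max ds_feas objds objdn by force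
  then have "(\<Sum>h=1..H. (real (H - h + 1) / \<beta>) * Dn h) = 0"
  proof -
    have "(\<Sum>h=1..H. (real (H - h + 1) / \<beta>) * Dn h) \<ge> 0" by (rule sum_nonneg) (use terms0 in auto)
    then show ?thesis using \<open>(\<Sum>h=1..H. (real (H - h + 1) / \<beta>) * Dn h) \<le> 0\<close> by linarith
  qed
  then have all0: "\<forall>h\<in>{1..H}. (real (H - h + 1) / \<beta>) * Dn h = 0"
    using sum_nonneg_eq_0_iff[of "{1..H}" "\<lambda>h. (real (H - h + 1) / \<beta>) * Dn h"] terms0 by auto
  show ?thesis
  proof (intro ballI allI impI)
    fix h s assume h: "h \<in> {1..H}" and Ep: "ET (dn h) s > 0"
    have "Dn h = 0" using all0 h beta_pos by auto
    have d0: "\<forall>sa. dn h sa \<ge> 0" using dn_feas h unfolding feasible_occ_def simplex_def by auto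
    have eq: "pol (dn h) s a = g h s a" for a
      by (rule gibbs_sum(2)[OF d0]) (use g0 g1 h \<open>Dn h = 0\<close> Ep in \<open>auto simp: Dn_def\<close>)
    show "\<exists>c. \<forall>a. pol (dn h) s a = c * (pol (dt h) s a * exp (\<beta> / real (H - h + 1) * Q h (s, a)))"
      by (rule exI[where x="1 / (\<Sum>a'\<in>UNIV. pol (dt h) s a' * exp (\<beta> / real (H - h + 1) * Q h (s, a')))"])
         (simp add: eq g_def gib_def)
  qed
qed

end
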